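(* Let $n\ge5$, $1\le m\le n-1$ with $2m\neq n$, $a>0$, and let $\Gamma^{m,n}$ be the closed discrete curve $p_k=a(\cos(2\pi mk/n),\sin(2\pi mk/n))$, $k=0,\dots,n-1$, with $l_0:=|p_{k+1}-p_k|=2a|\sin(m\pi/n)|$. Let $(A,B)\in\mathbb{R}^2$ and $\psi_k=A\cos(2\pi k/n)+B\sin(2\pi k/n)$. Then $\sum_k\psi_k=0$, and for every $C^2$ family $p(t)$ of closed discrete curves with $p(0)=\Gamma^{m,n}$, $\mathrm{Vol}(p(t))$ constant and $p_k'(0)=\psi_kN_k$, \[ \frac{d^2}{dt^2}\Big|_{t=0}L(p(t))=\frac{4}{l_0}\Big[\sin^2\frac{\pi}{n}-\cos\frac{2\pi}{n}\tan^2\frac{m\pi}{n}\Big]\sum_k\psi_k^2 . \] This value is $\ge0$ if $m\in\{1,n-1\}$, and is $<0$ if $2\le m\le n-2$ and $(A,B)\ne(0,0)$.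
   Context: A closed discrete curve is an $n$-tuple $(p_0,\dots,p_{n-1})$ of points of $\mathbb{R}^2$, indices modulo $n$, with $l_k:=|p_{k+1}-p_k|\ne0$ for all $k$. $R_\varphi$ denotes rotation of $\mathbb{R}^2$ by $\varphi$. Fix $R\in\{R_{\pi/2},R_{-\pi/2}\}$ and set $\sigma=+1$ if $R=R_{\pi/2}$, $\sigma=-1$ if $R=R_{-\pi/2}$. Edge normal $\nu_k:=R((p_{k+1}-p_k)/l_k)$. The signed angle $\theta_k\in(-\pi,\pi]$ at vertex $p_k$ is defined by $\nu_k=R_{\sigma\theta_k}\nu_{k-1}$. When $\theta_k\ne\pi$, the vertex normal is $N_k:=\dfrac{\nu_k+\nu_{k-1}}{1+\cos\theta_k}$. Length $L=\sum_k l_k$, area $\mathrm{Vol}=\frac12\sum_k\langle p_k,\nu_k\rangle l_k$. *)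

theory Defs
  imports "HOL-Analysis.Analysis"
begin

text \<open>Points of the plane R^2 are represented as complex numbers (real and
imaginary part are the two coordinates; the inner product on complex is the
Euclidean one). A discrete curve with n vertices is a function
p :: nat => complex, of which only p 0, ..., p (n-1) matter; indices are
taken modulo n. The parameter sigma is +1 for R = R_{pi/2} and -1 for
R = R_{-pi/2}.\<close>

definition rot :: "real \<Rightarrow> complex \<Rightarrow> complex" where
  "rot \<phi> z = cis \<phi> * z"

definition closed_discrete_curve :: "nat \<Rightarrow> (nat \<Rightarrow> complex) \<Rightarrow> bool" where
  "closed_discrete_curve n p \<longleftrightarrow> n > 0 \<and> (\<forall>k<n. p (Suc k mod n) \<noteq> p k)"

definition edge_len :: "nat \<Rightarrow> (nat \<Rightarrow> complex) \<Rightarrow> nat \<Rightarrow> real" where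
  "edge_len n p k = norm (p (Suc k mod n) - p (k mod n))"

definition edge_normal :: "real \<Rightarrow> nat \<Rightarrow> (nat \<Rightarrow> complex) \<Rightarrow> nat \<Rightarrow> complex" where
  "edge_normal \<sigma> n p k =
     rot (\<sigma> * pi / 2) ((p (Suc k mod n) - p (k mod n)) / of_real (edge_len n p k))"

definition prev_idx :: "nat \<Rightarrow> nat \<Rightarrow> nat" where
  "prev_idx n k = (k + n - 1) mod n"

definition signed_angle :: "real \<Rightarrow> nat \<Rightarrow> (nat \<Rightarrow> complex) \<Rightarrow> nat \<Rightarrow> real" where
  "signed_angle \<sigma> n p k =
     (THE \<theta>. -pi < \<theta> \<and> \<theta> \<le> pi \<and>
        edge_normal \<sigma> n p k = rot (\<sigma> * \<theta>) (edge_normal \<sigma> n p (prev_idx n k)))"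

definition vertex_normal :: "real \<Rightarrow> nat \<Rightarrow> (nat \<Rightarrow> complex) \<Rightarrow> nat \<Rightarrow> complex" where
  "vertex_normal \<sigma> n p k =
     (1 / (1 + cos (signed_angle \<sigma> n p k))) *\<^sub>R
       (edge_normal \<sigma> n p k + edge_normal \<sigma> n p (prev_idx n k))"

definition curve_length :: "nat \<Rightarrow> (nat \<Rightarrow> complex) \<Rightarrow> real" where
  "curve_length n p = (\<Sum>k<n. edge_len n p k)"

definition curve_vol :: "real \<Rightarrow> nat \<Rightarrow> (nat \<Rightarrow> complex) \<Rightarrow> real" where
  "curve_vol \<sigma> n p = (1/2) * (\<Sum>k<n. (p k \<bullet> edge_normal \<sigma> n p k) * edge_len n p k)"

definition Gamma :: "real \<Rightarrow> nat \<Rightarrow> nat \<Rightarrow> nat \<Rightarrow> complex" where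
  "Gamma a m n k = complex_of_real a * cis (2 * pi * real m * real k / real n)"

end

theory Submission
  imports Defs
begin

lemma inner_vderiv:
  fixes f g :: "real \<Rightarrow> complex"
  assumes "(f has_vector_derivative f') (at t)" "(g has_vector_derivative g') (at t)"
  shows "((\<lambda>s. f s \<bullet> g s) has_real_derivative (f' \<bullet> g t + f t \<bullet> g')) (at t)"
proof -
  have "((\<lambda>s. f s \<bullet> g s) has_derivative (\<lambda>h. f t \<bullet> (h *\<^sub>R g') + (h *\<^sub>R f') \<bullet> g t)) (at t)"
    using assms unfolding has_vector_derivative_def by (intro has_derivative_inner) auto
  then show ?thesis
    unfolding has_field_derivative_def
    by (rule has_derivative_eq_rhs) (auto simp: algebra_simps fun_eq_iff)
qed

lemma norm_vderiv:
  fixes f :: "real \<Rightarrow> complex"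
  assumes "(f has_vector_derivative f') (at t)" "f t \<noteq> 0"
  shows "((\<lambda>s. norm (f s)) has_real_derivative (f t \<bullet> f') / norm (f t)) (at t)"
proof -
  have d: "((\<lambda>s. f s \<bullet> f s) has_real_derivative (f' \<bullet> f t + f t \<bullet> f')) (at t)"
    by (rule inner_vderiv[OF assms(1) assms(1)])
  have pos: "0 < f t \<bullet> f t" using assms(2) by simp
  have "((\<lambda>s. sqrt (f s \<bullet> f s)) has_real_derivative
      inverse (sqrt (f t \<bullet> f t)) / 2 * (f' \<bullet> f t + f t \<bullet> f')) (at t)"
    using DERIV_chain2[OF DERIV_real_sqrt[OF pos] d] by simp
  then show ?thesis
    by (simp add: norm_eq_sqrt_inner[symmetric] inner_commute field_simps)
qed


lemma second_variation_general:
  fixes P :: "real \<Rightarrow> nat \<Rightarrow> complex" and P' P'' :: "nat \<Rightarrow> real \<Rightarrow> complex" and J :: complex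
  assumes n: "n > 0" and eps: "\<epsilon> > 0"
  and cl: "\<forall>t\<in>ball 0 \<epsilon>. \<forall>k<n. P t (Suc k mod n) \<noteq> P t k"
  and d1: "\<forall>k<n. \<forall>t\<in>ball 0 \<epsilon>. ((\<lambda>s. P s k) has_vector_derivative P' k t) (at t)"
  and d2: "\<forall>k<n. \<forall>t\<in>ball 0 \<epsilon>. (P' k has_vector_derivative P'' k t) (at t)"
  and vol: "\<forall>t\<in>ball 0 \<epsilon>. (\<Sum>k<n. P t k \<bullet> (J * (P t (Suc k mod n) - P t k)))
        = (\<Sum>k<n. P 0 k \<bullet> (J * (P 0 (Suc k mod n) - P 0 k)))"
  defines "E \<equiv> \<lambda>k. P 0 (Suc k mod n) - P 0 k"
    and "E1 \<equiv> \<lambda>k. P' (Suc k mod n) 0 - P' k 0"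
    and "E2 \<equiv> \<lambda>k. P'' (Suc k mod n) 0 - P'' k 0"
  shows "(deriv (\<lambda>t. \<Sum>k<n. norm (P t (Suc k mod n) - P t k)) has_real_derivative
      (\<Sum>k<n. ((E1 k \<bullet> E1 k + E k \<bullet> E2 k) * norm (E k) - (E k \<bullet> E1 k) * ((E k \<bullet> E1 k) / norm (E k)))
           / (norm (E k) * norm (E k)))) (at 0)"
   and "(\<Sum>k<n. P'' k 0 \<bullet> (J * E k) + 2 * (P' k 0 \<bullet> (J * E1 k)) + P 0 k \<bullet> (J * E2 k)) = 0"
proof -
  have sk: "Suc k mod n < n" for k using n by simp
  have z: "0 \<in> ball (0::real) \<epsilon>" using eps by simp
  have hE: "((\<lambda>s. P s (Suc k mod n) - P s k) has_vector_derivative (P' (Suc k mod n) t - P' k t)) (at t)"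
    if "k < n" "t \<in> ball 0 \<epsilon>" for k t
    using d1 sk that by (intro has_vector_derivative_diff) auto
  have hE1: "((\<lambda>s. P' (Suc k mod n) s - P' k s) has_vector_derivative (P'' (Suc k mod n) t - P'' k t)) (at t)"
    if "k < n" "t \<in> ball 0 \<epsilon>" for k t
    using d2 sk that by (intro has_vector_derivative_diff) auto
  define g where "g t = (\<Sum>k<n. ((P t (Suc k mod n) - P t k) \<bullet> (P' (Suc k mod n) t - P' k t))
        / norm (P t (Suc k mod n) - P t k))" for t
  have Lder: "((\<lambda>t. \<Sum>k<n. norm (P t (Suc k mod n) - P t k)) has_real_derivative g t) (at t)"
    if t: "t \<in> ball 0 \<epsilon>" for t
    unfolding g_def
    apply (rule DERIV_sum)
    apply (rule norm_vderiv)
    using hE t cl by auto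
  have "(g has_real_derivative
      (\<Sum>k<n. ((E1 k \<bullet> E1 k + E k \<bullet> E2 k) * norm (E k) - (E k \<bullet> E1 k) * ((E k \<bullet> E1 k) / norm (E k)))
           / (norm (E k) * norm (E k)))) (at 0)"
    unfolding g_def
  proof (rule DERIV_sum)
    fix k assume "k \<in> {..<n}"
    then have k: "k < n" by simp
    have a1: "((\<lambda>s. P s (Suc k mod n) - P s k) has_vector_derivative E1 k) (at 0)"
      using hE[OF k z] unfolding E1_def .
    have a2: "((\<lambda>s. P' (Suc k mod n) s - P' k s) has_vector_derivative E2 k) (at 0)"
      using hE1[OF k z] unfolding E2_def .
    have nz: "P 0 (Suc k mod n) - P 0 k \<noteq> 0" using cl z k by auto
    have nz': "norm (P 0 (Suc k mod n) - P 0 k) \<noteq> 0" using nz by simp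
    show "((\<lambda>t. (P t (Suc k mod n) - P t k) \<bullet> (P' (Suc k mod n) t - P' k t)
        / norm (P t (Suc k mod n) - P t k)) has_real_derivative
       ((E1 k \<bullet> E1 k + E k \<bullet> E2 k) * norm (E k) - (E k \<bullet> E1 k) * ((E k \<bullet> E1 k) / norm (E k)))
           / (norm (E k) * norm (E k))) (at 0)"
      using DERIV_divide[OF inner_vderiv[OF a1 a2] norm_vderiv[OF a1 nz] nz']
      unfolding E_def E1_def E2_def by simp
  qed
  then show "(deriv (\<lambda>t. \<Sum>k<n. norm (P t (Suc k mod n) - P t k)) has_real_derivative
      (\<Sum>k<n. ((E1 k \<bullet> E1 k + E k \<bullet> E2 k) * norm (E k) - (E k \<bullet> E1 k) * ((E k \<bullet> E1 k) / norm (E k)))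
           / (norm (E k) * norm (E k)))) (at 0)"
  proof (rule has_field_derivative_transform_within_open[OF _ open_ball z])
    fix x :: real assume x: "x \<in> ball 0 \<epsilon>"
    show "g x = deriv (\<lambda>t. \<Sum>k<n. norm (P t (Suc k mod n) - P t k)) x"
      using DERIV_imp_deriv[OF Lder[OF x]] by simp
  qed
  define W where "W t = (\<Sum>k<n. P t k \<bullet> (J * (P t (Suc k mod n) - P t k)))" for t
  define W1 where "W1 t = (\<Sum>k<n. P' k t \<bullet> (J * (P t (Suc k mod n) - P t k))
        + P t k \<bullet> (J * (P' (Suc k mod n) t - P' k t)))" for t
  have Wd: "(W has_real_derivative W1 t) (at t)" if t: "t \<in> ball 0 \<epsilon>" for t
    unfolding W_def W1_def
  proof (rule DERIV_sum)
    fix k assume "k \<in> {..<n}"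
    then have k: "k < n" by simp
    have a1: "((\<lambda>s. P s k) has_vector_derivative P' k t) (at t)" using d1 k t by blast
    show "((\<lambda>s. P s k \<bullet> (J * (P s (Suc k mod n) - P s k))) has_real_derivative
        P' k t \<bullet> (J * (P t (Suc k mod n) - P t k)) + P t k \<bullet> (J * (P' (Suc k mod n) t - P' k t))) (at t)"
      by (rule inner_vderiv[OF a1 has_vector_derivative_mult_right[OF hE[OF k t]]])
  qed
  have W10: "W1 t = 0" if t: "t \<in> ball 0 \<epsilon>" for t
  proof -
    have c: "W 0 = W x" if "x \<in> ball 0 \<epsilon>" for x
    proof -
      have "W x = W 0" unfolding W_def by (rule vol[rule_format, OF that])
      then show ?thesis by simp
    qed
    have "(W has_real_derivative 0) (at t)"
      by (rule has_field_derivative_transform_within_open[OF DERIV_const[of "W 0"] open_ball t c])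
    from DERIV_unique[OF Wd[OF t] this] show ?thesis .
  qed
  have "(W1 has_real_derivative
     (\<Sum>k<n. (P'' k 0 \<bullet> (J * E k) + P' k 0 \<bullet> (J * E1 k)) + (P' k 0 \<bullet> (J * E1 k) + P 0 k \<bullet> (J * E2 k)))) (at 0)"
    unfolding W1_def
  proof (rule DERIV_sum)
    fix k assume "k \<in> {..<n}"
    then have k: "k < n" by simp
    have a1: "((\<lambda>s. P s k) has_vector_derivative P' k 0) (at 0)" using d1 k z by blast
    have a2: "(P' k has_vector_derivative P'' k 0) (at 0)" using d2 k z by blast
    show "((\<lambda>t. P' k t \<bullet> (J * (P t (Suc k mod n) - P t k)) + P t k \<bullet> (J * (P' (Suc k mod n) t - P' k t)))
        has_real_derivative (P'' k 0 \<bullet> (J * E k) + P' k 0 \<bullet> (J * E1 k)) + (P' k 0 \<bullet> (J * E1 k) + P 0 k \<bullet> (J * E2 k))) (at 0)"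
      unfolding E_def E1_def E2_def
      by (rule DERIV_add[OF inner_vderiv[OF a2 has_vector_derivative_mult_right[OF hE[OF k z]]]
                            inner_vderiv[OF a1 has_vector_derivative_mult_right[OF hE1[OF k z]]]])
  qed
  moreover have "(W1 has_real_derivative 0) (at 0)"
    by (rule has_field_derivative_transform_within_open[OF DERIV_const[of 0] open_ball z])
       (simp add: W10)
  ultimately have "(\<Sum>k<n. (P'' k 0 \<bullet> (J * E k) + P' k 0 \<bullet> (J * E1 k)) + (P' k 0 \<bullet> (J * E1 k) + P 0 k \<bullet> (J * E2 k))) = 0"
    by (rule DERIV_unique)
  then show "(\<Sum>k<n. P'' k 0 \<bullet> (J * E k) + 2 * (P' k 0 \<bullet> (J * E1 k)) + P 0 k \<bullet> (J * E2 k)) = 0"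
    by (simp add: algebra_simps)
qed


lemma inner_Re: "(x::complex) \<bullet> y = Re (x * cnj y)"
  by (simp add: inner_complex_def)

lemma sum_shift_periodic:
  fixes f :: "nat \<Rightarrow> 'a::ab_group_add"
  assumes "f n = f 0"
  shows "(\<Sum>k<n. f (Suc k)) = (\<Sum>k<n. f k)"
proof -
  have "(\<Sum>k<Suc n. f k) = f 0 + (\<Sum>k<n. f (Suc k))" by (rule sum.lessThan_Suc_shift)
  moreover have "(\<Sum>k<Suc n. f k) = (\<Sum>k<n. f k) + f n" by simp
  ultimately show ?thesis using assms by (simp add: add.commute)
qed

lemmas cnj_simps = complex_cnj_mult complex_cnj_diff complex_cnj_add complex_cnj_complex_of_real complex_cnj_minus

lemma ss: "sin (x::real) * sin x = 1 - cos x * cos x"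
  using sin_cos_squared_add[of x] by (simp add: power2_eq_square)

lemma T3:
  fixes u :: complex and w :: complex
  assumes uu: "u * cnj u = 1" and w: "w = cis \<alpha>" and J: "J = complex_of_real \<sigma> * \<i>"
  shows "(complex_of_real (c * x) * u) \<bullet> (J * (complex_of_real (c * y) * (w * u) - complex_of_real (c * x) * u))
     = - (c * c * \<sigma> * sin \<alpha> * x * y)"
proof -
  have "(complex_of_real (c * x) * u) * cnj (J * (complex_of_real (c * y) * (w * u) - complex_of_real (c * x) * u))
      = complex_of_real (c * c * x) * (u * cnj u) * cnj J * (of_real y * cnj w - of_real x)"
    by (simp only: cnj_simps of_real_mult) algebra
  also have "\<dots> = complex_of_real (c * c * x) * cnj J * (of_real y * cnj w - of_real x)"
    by (simp add: uu)
  finally have eq: "(complex_of_real (c * x) * u) * cnj (J * (complex_of_real (c * y) * (w * u) - complex_of_real (c * x) * u))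
      = complex_of_real (c * c * x) * cnj J * (of_real y * cnj w - of_real x)" .
  have "Re (complex_of_real (c * c * x) * cnj J * (of_real y * cnj w - of_real x)) = - (c * c * \<sigma> * sin \<alpha> * x * y)"
    by (simp add: J w algebra_simps)
  then show ?thesis by (simp only: inner_Re eq)
qed

lemma T4:
  fixes u :: complex and w :: complex
  assumes uu: "u * cnj u = 1" and w: "w = cis \<alpha>"
  shows "(complex_of_real (c * y) * (w * u) - complex_of_real (c * x) * u) \<bullet> (complex_of_real (c * y) * (w * u) - complex_of_real (c * x) * u)
     = c * c * (y * y - 2 * cos \<alpha> * x * y + x * x)"
proof -
  have "(complex_of_real (c * y) * (w * u) - complex_of_real (c * x) * u) * cnj (complex_of_real (c * y) * (w * u) - complex_of_real (c * x) * u)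
      = complex_of_real (c * c) * (u * cnj u) * (of_real y * w - of_real x) * (of_real y * cnj w - of_real x)"
    by (simp only: cnj_simps of_real_mult) algebra
  also have "\<dots> = complex_of_real (c * c) * (of_real y * w - of_real x) * (of_real y * cnj w - of_real x)"
    by (simp add: uu)
  finally have eq: "(complex_of_real (c * y) * (w * u) - complex_of_real (c * x) * u) * cnj (complex_of_real (c * y) * (w * u) - complex_of_real (c * x) * u)
      = complex_of_real (c * c) * (of_real y * w - of_real x) * (of_real y * cnj w - of_real x)" .
  have "Re (complex_of_real (c * c) * (of_real y * w - of_real x) * (of_real y * cnj w - of_real x))
     = c * c * (y * y - 2 * cos \<alpha> * x * y + x * x)"
    by (simp add: w algebra_simps ss)
  then show ?thesis by (simp only: inner_Re eq)
qed

lemma T5: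
  fixes u :: complex and w :: complex
  assumes uu: "u * cnj u = 1" and w: "w = cis \<alpha>"
  shows "(complex_of_real a * (w * u) - complex_of_real a * u) \<bullet> (complex_of_real (c * y) * (w * u) - complex_of_real (c * x) * u)
     = a * c * (1 - cos \<alpha>) * (x + y)"
proof -
  have "(complex_of_real a * (w * u) - complex_of_real a * u) * cnj (complex_of_real (c * y) * (w * u) - complex_of_real (c * x) * u)
      = complex_of_real (a * c) * (u * cnj u) * (w - 1) * (of_real y * cnj w - of_real x)"
    by (simp only: cnj_simps of_real_mult) algebra
  also have "\<dots> = complex_of_real (a * c) * (w - 1) * (of_real y * cnj w - of_real x)"
    by (simp add: uu)
  finally have eq: "(complex_of_real a * (w * u) - complex_of_real a * u) * cnj (complex_of_real (c * y) * (w * u) - complex_of_real (c * x) * u)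
      = complex_of_real (a * c) * (w - 1) * (of_real y * cnj w - of_real x)" .
  have "Re (complex_of_real (a * c) * (w - 1) * (of_real y * cnj w - of_real x))
     = a * c * (1 - cos \<alpha>) * (x + y)"
    by (simp add: w algebra_simps ss)
  then show ?thesis by (simp only: inner_Re eq)
qed
lemma T1:
  fixes u R R' w :: complex
  assumes ww: "w * cnj w = 1"
  shows "(complex_of_real a * (w * u) - complex_of_real a * u) \<bullet> (R' - R)
     = a * Re ((w * u) * (1 - cnj w) * cnj R') - a * Re (u * (w - 1) * cnj R)"
proof -
  have "(w * u) * (1 - cnj w) = w * u - (w * cnj w) * u" by (simp add: algebra_simps)
  also have "\<dots> = w * u - u" by (simp add: ww)
  finally have e: "(w * u) * (1 - cnj w) = w * u - u" .
  have "(complex_of_real a * (w * u) - complex_of_real a * u) \<bullet> (R' - R)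
     = a * Re ((w * u - u) * cnj R') - a * Re ((w * u - u) * cnj R)"
    by (simp add: inner_Re algebra_simps)
  also have "\<dots> = a * Re ((w * u) * (1 - cnj w) * cnj R') - a * Re (u * (w - 1) * cnj R)"
    by (simp only: e) (simp add: algebra_simps)
  finally show ?thesis .
qed

lemma T1b:
  fixes u R w :: complex
  assumes w: "w = cis \<alpha>"
  shows "a * Re (u * (1 - cnj w) * cnj R) - a * Re (u * (w - 1) * cnj R) = a * (2 - 2 * cos \<alpha>) * Re (u * cnj R)"
proof -
  have "u * (1 - cnj w) * cnj R - u * (w - 1) * cnj R = (u * cnj R) * (2 - (w + cnj w))"
    by (simp add: algebra_simps)
  also have "w + cnj w = complex_of_real (2 * cos \<alpha>)" by (simp add: w complex_eq_iff)
  finally have "Re (u * (1 - cnj w) * cnj R) - Re (u * (w - 1) * cnj R) = Re ((u * cnj R) * complex_of_real (2 - 2 * cos \<alpha>))"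
    by (metis minus_complex.sel of_real_diff of_real_numeral)
  also have "\<dots> = (2 - 2 * cos \<alpha>) * Re (u * cnj R)" by simp
  finally have "Re (u * (1 - cnj w) * cnj R) - Re (u * (w - 1) * cnj R) = (2 - 2 * cos \<alpha>) * Re (u * cnj R)" .
  then have "a * (Re (u * (1 - cnj w) * cnj R) - Re (u * (w - 1) * cnj R)) = a * ((2 - 2 * cos \<alpha>) * Re (u * cnj R))"
    by simp
  then show ?thesis by (metis right_diff_distrib mult.assoc)
qed

lemma T2:
  fixes u R R' w J :: complex
  assumes ww: "w * cnj w = 1"
  shows "R \<bullet> (J * (complex_of_real a * (w * u) - complex_of_real a * u)) + (complex_of_real a * u) \<bullet> (J * (R' - R))
     = Re (complex_of_real a * cnj J * cnj w * (w * u) * cnj R') + Re (complex_of_real a * (J * (w - 1) - cnj J) * u * cnj R)"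
proof -
  have e: "cnj w * (w * u) = u" using ww by (simp add: algebra_simps mult.commute[of "cnj w"])
  have "R \<bullet> (J * (complex_of_real a * (w * u) - complex_of_real a * u)) = Re (complex_of_real a * J * (w - 1) * u * cnj R)"
    by (subst inner_commute) (simp add: inner_Re algebra_simps)
  moreover have "(complex_of_real a * u) \<bullet> (J * (R' - R)) = Re (complex_of_real a * cnj J * (cnj w * (w * u)) * cnj R') - Re (complex_of_real a * cnj J * u * cnj R)"
    by (simp only: e) (simp add: inner_Re algebra_simps)
  ultimately show ?thesis by (simp add: algebra_simps)
qed

lemma T2b:
  fixes u R w J :: complex
  assumes w: "w = cis \<alpha>" and J: "J = complex_of_real \<sigma> * \<i>"
  shows "Re (complex_of_real a * cnj J * cnj w * u * cnj R) + Re (complex_of_real a * (J * (w - 1) - cnj J) * u * cnj R)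
    = - 2 * a * \<sigma> * sin \<alpha> * Re (u * cnj R)"
proof -
  have "complex_of_real a * cnj J * cnj w * u * cnj R + complex_of_real a * (J * (w - 1) - cnj J) * u * cnj R
     = (u * cnj R) * (complex_of_real a * (cnj J * cnj w + J * (w - 1) - cnj J))" by (simp add: algebra_simps)
  also have "complex_of_real a * (cnj J * cnj w + J * (w - 1) - cnj J) = complex_of_real (- 2 * a * \<sigma> * sin \<alpha>)"
    by (simp add: w J complex_eq_iff algebra_simps)
  finally have "Re (complex_of_real a * cnj J * cnj w * u * cnj R + complex_of_real a * (J * (w - 1) - cnj J) * u * cnj R)
     = - 2 * a * \<sigma> * sin \<alpha> * Re (u * cnj R)" by simp
  then show ?thesis by simp
qed
lemma core:
  fixes u R :: "nat \<Rightarrow> complex" and \<psi> :: "nat \<Rightarrow> real" and w J :: complex and a c \<sigma> l \<alpha> :: real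
  assumes us: "\<And>k. u (Suc k) = w * u k" and un: "u n = u 0" and \<psi>n: "\<psi> n = \<psi> 0" and Rn: "R n = R 0"
    and uu: "\<And>k. u k * cnj (u k) = 1" and w: "w = cis \<alpha>" and J: "J = complex_of_real \<sigma> * \<i>"
    and s\<sigma>: "\<sigma> \<noteq> 0" and s\<alpha>: "sin \<alpha> \<noteq> 0" and a: "a > 0" and l: "l > 0"
    and nw: "a * norm (w - 1) = l" and l2: "l * l = a * a * (2 - 2 * cos \<alpha>)"
  defines "p \<equiv> \<lambda>k. complex_of_real a * u k"
    and "q \<equiv> \<lambda>k. complex_of_real (c * \<psi> k) * u k"
  defines "E \<equiv> \<lambda>k. p (Suc k) - p k"
    and "E1 \<equiv> \<lambda>k. q (Suc k) - q k"
    and "E2 \<equiv> \<lambda>k. R (Suc k) - R k"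
  assumes vol: "(\<Sum>k<n. R k \<bullet> (J * E k) + 2 * (q k \<bullet> (J * E1 k)) + p k \<bullet> (J * E2 k)) = 0"
  shows "(\<Sum>k<n. ((E1 k \<bullet> E1 k + E k \<bullet> E2 k) * norm (E k) - (E k \<bullet> E1 k) * ((E k \<bullet> E1 k) / norm (E k)))
           / (norm (E k) * norm (E k)))
     = c * c / l * ((1 + cos \<alpha>) * (\<Sum>k<n. \<psi> k * \<psi> k) + (cos \<alpha> - 3) * (\<Sum>k<n. \<psi> k * \<psi> (Suc k)))"
proof -
  define S2 where "S2 = (\<Sum>k<n. \<psi> k * \<psi> k)"
  define S1 where "S1 = (\<Sum>k<n. \<psi> k * \<psi> (Suc k))"
  define X where "X = (\<Sum>k<n. Re (u k * cnj (R k)))"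
  have ww: "w * cnj w = 1" using w by (simp add: cis_cnj cis_mult)
  have Ek: "E k = complex_of_real a * (w * u k) - complex_of_real a * u k" for k
    by (simp add: E_def p_def us)
  have E1k: "E1 k = complex_of_real (c * \<psi> (Suc k)) * (w * u k) - complex_of_real (c * \<psi> k) * u k" for k
    by (simp add: E1_def q_def us)
  have nu: "norm (u k) = 1" for k
  proof -
    have "complex_of_real ((norm (u k))\<^sup>2) = 1" using uu[of k] complex_norm_square[of "u k"] by simp
    then have "(norm (u k))\<^sup>2 = 1" using of_real_eq_1_iff by blast
    then show ?thesis using norm_ge_zero[of "u k"] by (auto simp add: power2_eq_1_iff)
  qed
  have nE: "norm (E k) = l" for k
  proof -
    have "E k = complex_of_real a * u k * (w - 1)" by (simp add: Ek algebra_simps)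
    then show ?thesis using a nw nu[of k] by (simp add: norm_mult)
  qed
  have s1: "(\<Sum>k<n. E1 k \<bullet> E1 k) = c * c * (2 * S2 - 2 * cos \<alpha> * S1)"
  proof -
    have "(\<Sum>k<n. E1 k \<bullet> E1 k) = (\<Sum>k<n. c * c * (\<psi> (Suc k) * \<psi> (Suc k) - 2 * cos \<alpha> * \<psi> k * \<psi> (Suc k) + \<psi> k * \<psi> k))"
      by (rule sum.cong[OF refl]) (simp only: E1k T4[OF uu w])
    also have "\<dots> = c * c * ((\<Sum>k<n. \<psi> (Suc k) * \<psi> (Suc k)) - 2 * cos \<alpha> * S1 + S2)"
      by (simp add: S1_def S2_def sum_distrib_left sum.distrib sum_subtractf algebra_simps)
    also have "(\<Sum>k<n. \<psi> (Suc k) * \<psi> (Suc k)) = S2"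
      unfolding S2_def by (rule sum_shift_periodic[where f="\<lambda>k. \<psi> k * \<psi> k"]) (simp add: \<psi>n)
    finally show ?thesis by (simp add: algebra_simps)
  qed
  have s2: "(\<Sum>k<n. E k \<bullet> E2 k) = a * (2 - 2 * cos \<alpha>) * X"
  proof -
    define f where "f j = a * Re (u j * (1 - cnj w) * cnj (R j))" for j
    define g where "g j = a * Re (u j * (w - 1) * cnj (R j))" for j
    have "(\<Sum>k<n. E k \<bullet> E2 k) = (\<Sum>k<n. f (Suc k) - g k)"
      by (rule sum.cong[OF refl]) (simp only: Ek E2_def T1[OF ww] f_def g_def us)
    also have "\<dots> = (\<Sum>k<n. f k) - (\<Sum>k<n. g k)"
    proof -
      have sf: "(\<Sum>k<n. f (Suc k)) = (\<Sum>k<n. f k)" by (rule sum_shift_periodic) (simp add: f_def un Rn)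
      show ?thesis by (simp only: sum_subtractf sf)
    qed
    also have "\<dots> = (\<Sum>k<n. a * (2 - 2 * cos \<alpha>) * Re (u k * cnj (R k)))"
      unfolding sum_subtractf[symmetric] by (rule sum.cong[OF refl]) (simp only: f_def g_def T1b[OF w])
    finally show ?thesis by (simp add: X_def sum_distrib_left)
  qed
  have s3: "(\<Sum>k<n. (E k \<bullet> E1 k) * (E k \<bullet> E1 k)) = a * a * c * c * (1 - cos \<alpha>) * (1 - cos \<alpha>) * (2 * S2 + 2 * S1)"
  proof -
    have "(\<Sum>k<n. (E k \<bullet> E1 k) * (E k \<bullet> E1 k)) = (\<Sum>k<n. a * a * c * c * (1 - cos \<alpha>) * (1 - cos \<alpha>) *
        (\<psi> k * \<psi> k + 2 * (\<psi> k * \<psi> (Suc k)) + \<psi> (Suc k) * \<psi> (Suc k)))"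
      by (rule sum.cong[OF refl]) (simp only: Ek E1k T5[OF uu w], simp add: algebra_simps)
    also have "\<dots> = a * a * c * c * (1 - cos \<alpha>) * (1 - cos \<alpha>) *
        (\<Sum>k<n. \<psi> k * \<psi> k + 2 * (\<psi> k * \<psi> (Suc k)) + \<psi> (Suc k) * \<psi> (Suc k))"
      by (simp only: sum_distrib_left)
    also have "(\<Sum>k<n. \<psi> k * \<psi> k + 2 * (\<psi> k * \<psi> (Suc k)) + \<psi> (Suc k) * \<psi> (Suc k))
        = S2 + 2 * S1 + (\<Sum>k<n. \<psi> (Suc k) * \<psi> (Suc k))"
      by (simp add: S1_def S2_def sum_distrib_left sum.distrib)
    also have "(\<Sum>k<n. \<psi> (Suc k) * \<psi> (Suc k)) = S2"
      unfolding S2_def by (rule sum_shift_periodic[where f="\<lambda>k. \<psi> k * \<psi> k"]) (simp add: \<psi>n)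
    finally show ?thesis by (simp add: algebra_simps)
  qed
  have s4: "a * X = - (c * c * S1)"
  proof -
    define f where "f j = Re (complex_of_real a * cnj J * cnj w * u j * cnj (R j))" for j
    define g where "g j = Re (complex_of_real a * (J * (w - 1) - cnj J) * u j * cnj (R j))" for j
    have "0 = (\<Sum>k<n. (f (Suc k) + g k) + 2 * (- (c * c * \<sigma> * sin \<alpha> * \<psi> k * \<psi> (Suc k))))"
      unfolding vol[symmetric]
    proof (rule sum.cong[OF refl])
      fix k
      have t2: "R k \<bullet> (J * (complex_of_real a * (w * u k) - complex_of_real a * u k)) + (complex_of_real a * u k) \<bullet> (J * (R (Suc k) - R k))
        = f (Suc k) + g k" unfolding f_def g_def us by (rule T2[OF ww])
      have t3: "(complex_of_real (c * \<psi> k) * u k) \<bullet> (J * (complex_of_real (c * \<psi> (Suc k)) * (w * u k) - complex_of_real (c * \<psi> k) * u k))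
        = - (c * c * \<sigma> * sin \<alpha> * \<psi> k * \<psi> (Suc k))" by (rule T3[OF uu w J])
      show "R k \<bullet> (J * E k) + 2 * (q k \<bullet> (J * E1 k)) + p k \<bullet> (J * E2 k)
          = f (Suc k) + g k + 2 * - (c * c * \<sigma> * sin \<alpha> * \<psi> k * \<psi> (Suc k))"
        unfolding Ek E1k E2_def p_def q_def using t2 t3 by linarith
    qed
    also have "\<dots> = (\<Sum>k<n. f k + g k) - 2 * c * c * \<sigma> * sin \<alpha> * S1"
    proof -
      have sf: "(\<Sum>k<n. f (Suc k)) = (\<Sum>k<n. f k)" by (rule sum_shift_periodic) (simp add: f_def un Rn)
      have "(\<Sum>k<n. (f (Suc k) + g k) + 2 * (- (c * c * \<sigma> * sin \<alpha> * \<psi> k * \<psi> (Suc k))))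
          = (\<Sum>k<n. f (Suc k)) + (\<Sum>k<n. g k) - (2 * c * c * \<sigma> * sin \<alpha>) * (\<Sum>k<n. \<psi> k * \<psi> (Suc k))"
      proof -
        have "(\<Sum>k<n. c * c * \<sigma> * sin \<alpha> * \<psi> k * \<psi> (Suc k)) = (c * c * \<sigma> * sin \<alpha>) * (\<Sum>k<n. \<psi> k * \<psi> (Suc k))"
          by (simp add: sum_distrib_left mult.assoc)
        moreover have "(\<Sum>k<n. (f (Suc k) + g k) + 2 * (- (c * c * \<sigma> * sin \<alpha> * \<psi> k * \<psi> (Suc k))))
          = (\<Sum>k<n. f (Suc k)) + (\<Sum>k<n. g k) - 2 * (\<Sum>k<n. c * c * \<sigma> * sin \<alpha> * \<psi> k * \<psi> (Suc k))"
          by (simp only: sum.distrib sum_distrib_left[symmetric] sum_negf)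
        ultimately show ?thesis by simp
      qed
      then show ?thesis by (simp only: sf sum.distrib S1_def)
    qed
    also have "(\<Sum>k<n. f k + g k) = (\<Sum>k<n. - 2 * a * \<sigma> * sin \<alpha> * Re (u k * cnj (R k)))"
      by (rule sum.cong[OF refl]) (simp only: f_def g_def T2b[OF w J])
    finally have "0 = - 2 * \<sigma> * sin \<alpha> * (a * X + c * c * S1)"
      by (simp add: X_def sum_distrib_left algebra_simps)
    then show ?thesis using s\<sigma> s\<alpha> by simp
  qed
  have "(\<Sum>k<n. ((E1 k \<bullet> E1 k + E k \<bullet> E2 k) * norm (E k) - (E k \<bullet> E1 k) * ((E k \<bullet> E1 k) / norm (E k)))
           / (norm (E k) * norm (E k)))
     = (\<Sum>k<n. E1 k \<bullet> E1 k + E k \<bullet> E2 k) / l - (\<Sum>k<n. (E k \<bullet> E1 k) * (E k \<bullet> E1 k)) / (l * l * l)"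
  proof -
    have "(\<Sum>k<n. ((E1 k \<bullet> E1 k + E k \<bullet> E2 k) * norm (E k) - (E k \<bullet> E1 k) * ((E k \<bullet> E1 k) / norm (E k)))
           / (norm (E k) * norm (E k)))
      = (\<Sum>k<n. (E1 k \<bullet> E1 k + E k \<bullet> E2 k) / l - ((E k \<bullet> E1 k) * (E k \<bullet> E1 k)) / (l * l * l))"
      by (rule sum.cong[OF refl]) (use l in \<open>simp add: nE field_simps\<close>)
    then show ?thesis by (simp only: sum_subtractf sum_divide_distrib)
  qed
  also have "\<dots> = (c * c * (2 * S2 - 2 * cos \<alpha> * S1) + (2 - 2 * cos \<alpha>) * (a * X)) / l
       - a * a * c * c * (1 - cos \<alpha>) * (1 - cos \<alpha>) * (2 * S2 + 2 * S1) / (l * l * l)"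
    by (simp add: sum.distrib s1 s2 s3 algebra_simps)
  also have "a * a * c * c * (1 - cos \<alpha>) * (1 - cos \<alpha>) * (2 * S2 + 2 * S1) / (l * l * l)
      = c * c * (1 - cos \<alpha>) * (S2 + S1) / l"
  proof -
    have "a * a * c * c * (1 - cos \<alpha>) * (1 - cos \<alpha>) * (2 * S2 + 2 * S1) = (l * l) * (c * c * (1 - cos \<alpha>) * (S2 + S1))"
      by (simp add: l2 algebra_simps)
    then have "a * a * c * c * (1 - cos \<alpha>) * (1 - cos \<alpha>) * (2 * S2 + 2 * S1) / (l * l * l)
       = (l * l) * (c * c * (1 - cos \<alpha>) * (S2 + S1)) / (l * l * l)" by (rule arg_cong[where f="\<lambda>x. x / (l * l * l)"])
    also have "\<dots> = c * c * (1 - cos \<alpha>) * (S2 + S1) / l" using l by (simp add: field_simps)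
    finally show ?thesis .
  qed
  finally have eq: "(\<Sum>k<n. ((E1 k \<bullet> E1 k + E k \<bullet> E2 k) * norm (E k) - (E k \<bullet> E1 k) * ((E k \<bullet> E1 k) / norm (E k)))
           / (norm (E k) * norm (E k)))
     = (c * c * (2 * S2 - 2 * cos \<alpha> * S1) + (2 - 2 * cos \<alpha>) * (- (c * c * S1))) / l
       - c * c * (1 - cos \<alpha>) * (S2 + S1) / l" by (simp only: s4)
  have num: "(c * c * (2 * S2 - 2 * cos \<alpha> * S1) + (2 - 2 * cos \<alpha>) * (- (c * c * S1)))
       - c * c * (1 - cos \<alpha>) * (S2 + S1) = c * c * ((1 + cos \<alpha>) * S2 + (cos \<alpha> - 3) * S1)"
    by (simp add: algebra_simps)
  have "(c * c * (2 * S2 - 2 * cos \<alpha> * S1) + (2 - 2 * cos \<alpha>) * (- (c * c * S1))) / l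
       - c * c * (1 - cos \<alpha>) * (S2 + S1) / l = c * c * ((1 + cos \<alpha>) * S2 + (cos \<alpha> - 3) * S1) / l"
    by (simp only: diff_divide_distrib[symmetric] num)
  with eq show ?thesis unfolding S1_def S2_def by simp
qed


lemma cis_plus_2pi_nat: "cis (x + 2 * pi * real j) = cis x"
proof -
  have "cis (2 * pi * real j) = 1" by (simp add: cis_multiple_2pi)
  then show ?thesis by (simp add: cis_mult[symmetric])
qed

lemma cis_mod_period:
  assumes "n > 0"
  shows "cis (2 * pi * real m * real (k mod n) / real n) = cis (2 * pi * real m * real k / real n)"
proof -
  have k: "real k = real (k mod n) + real n * real (k div n)"
    by (metis mod_div_mult_eq mult.commute of_nat_add of_nat_mult)
  have "2 * pi * real m * real k / real n = 2 * pi * real m * real (k mod n) / real n + 2 * pi * real (m * (k div n))"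
    using assms by (simp add: k field_simps)
  then have "cis (2 * pi * real m * real k / real n) = cis (2 * pi * real m * real (k mod n) / real n + 2 * pi * real (m * (k div n)))"
    by (rule arg_cong)
  also have "\<dots> = cis (2 * pi * real m * real (k mod n) / real n)" by (rule cis_plus_2pi_nat)
  finally show ?thesis by simp
qed

lemma sum_cis_roots:
  assumes "0 < j" "2 * j < n"
  shows "(\<Sum>k<n. cis (2 * pi * real j * real k / real n)) = 0"
proof -
  define \<omega> where "\<omega> = cis (2 * pi * real j / real n)"
  have n: "real n > 0" using assms by simp
  have "0 < 2 * pi * real j / real n" using assms n by simp
  moreover have "2 * pi * real j / real n < pi"
  proof -
    have "2 * real j < real n" using assms(2) by linarith
    then have "2 * pi * real j < pi * real n" by (simp add: algebra_simps)
    then show ?thesis using n by (simp add: field_simps)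
  qed
  ultimately have "sin (2 * pi * real j / real n) > 0" by (rule sin_gt_zero)
  then have w1: "\<omega> \<noteq> 1" unfolding \<omega>_def by (auto simp: complex_eq_iff)
  have "(\<Sum>k<n. cis (2 * pi * real j * real k / real n)) = (\<Sum>k<n. \<omega> ^ k)"
  proof (rule sum.cong[OF refl])
    fix k
    have "\<omega> ^ k = cis (real k * (2 * pi * real j / real n))" unfolding \<omega>_def by (simp add: Complex.DeMoivre)
    also have "real k * (2 * pi * real j / real n) = 2 * pi * real j * real k / real n" by simp
    finally show "cis (2 * pi * real j * real k / real n) = \<omega> ^ k" by simp
  qed
  also have "\<dots> = (\<omega> ^ n - 1) / (\<omega> - 1)" by (rule geometric_sum[OF w1])
  also have "\<omega> ^ n = 1" using n by (simp add: \<omega>_def Complex.DeMoivre cis_multiple_2pi)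
  finally show ?thesis by simp
qed

lemma sum_cos_roots:
  assumes "0 < j" "2 * j < n"
  shows "(\<Sum>k<n. cos (2 * pi * real j * real k / real n)) = 0"
    and "(\<Sum>k<n. sin (2 * pi * real j * real k / real n)) = 0"
  using arg_cong[OF sum_cis_roots[OF assms], of Re] arg_cong[OF sum_cis_roots[OF assms], of Im]
  by simp_all

lemma pp_gen: "(A * cos x + B * sin x) * (B * cos x - A * sin x) = A * B * cos (2 * x) + (B * B - A * A) / 2 * sin (2 * x)"
  for x :: real
proof -
  have "cos (2 * x) = cos x * cos x - sin x * sin x" by (simp add: cos_double power2_eq_square)
  moreover have "sin (2 * x) = 2 * sin x * cos x" by (rule sin_double)
  ultimately show ?thesis by (simp only:) (simp add: field_simps)
qed

lemma psi_facts:
  fixes A B :: real and n :: nat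
  assumes n: "n \<ge> 5"
  defines "\<psi> \<equiv> (\<lambda>k::nat. A * cos (2 * pi * real k / real n) + B * sin (2 * pi * real k / real n))"
  shows "(\<Sum>k<n. \<psi> k) = 0"
    and "(\<Sum>k<n. \<psi> k * \<psi> (Suc k)) = cos (2 * pi / real n) * (\<Sum>k<n. \<psi> k * \<psi> k)"
proof -
  have c1: "(\<Sum>k<n. cos (2 * pi * real k / real n)) = 0" "(\<Sum>k<n. sin (2 * pi * real k / real n)) = 0"
    using sum_cos_roots[of 1 n] n by simp_all
  have c2: "(\<Sum>k<n. cos (2 * (2 * pi * real k / real n))) = 0" "(\<Sum>k<n. sin (2 * (2 * pi * real k / real n))) = 0"
    using sum_cos_roots[of 2 n] n by (simp_all add: algebra_simps)
  show "(\<Sum>k<n. \<psi> k) = 0"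
    by (simp add: \<psi>_def sum.distrib sum_distrib_left[symmetric] c1)
  define h where "h = 2 * pi / real n"
  define \<phi> where "\<phi> k = B * cos (2 * pi * real k / real n) - A * sin (2 * pi * real k / real n)" for k
  have sh: "\<psi> (Suc k) = cos h * \<psi> k + sin h * \<phi> k" for k
  proof -
    have "2 * pi * real (Suc k) / real n = 2 * pi * real k / real n + h" using n by (simp add: h_def field_simps)
    then show ?thesis by (simp add: \<psi>_def \<phi>_def cos_add sin_add algebra_simps)
  qed
  have pp: "\<psi> k * \<phi> k = A * B * cos (2 * (2 * pi * real k / real n)) + (B * B - A * A) / 2 * sin (2 * (2 * pi * real k / real n))" for k
    unfolding \<psi>_def \<phi>_def by (rule pp_gen)
  have zz: "(\<Sum>k<n. \<psi> k * \<phi> k) = 0"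
    by (simp only: pp sum.distrib sum_distrib_left[symmetric] c2 mult_zero_right add_0)
  then have z: "(\<Sum>k<n. sin h * (\<psi> k * \<phi> k)) = 0" by (simp add: sum_distrib_left[symmetric])
  have "(\<Sum>k<n. \<psi> k * \<psi> (Suc k)) = (\<Sum>k<n. cos h * (\<psi> k * \<psi> k) + sin h * (\<psi> k * \<phi> k))"
    by (rule sum.cong[OF refl]) (simp add: sh algebra_simps)
  also have "\<dots> = cos h * (\<Sum>k<n. \<psi> k * \<psi> k)"
    by (simp only: sum.distrib sum_distrib_left[symmetric] zz mult_zero_right add_0_right)
  finally show "(\<Sum>k<n. \<psi> k * \<psi> (Suc k)) = cos (2 * pi / real n) * (\<Sum>k<n. \<psi> k * \<psi> k)"
    by (simp add: h_def)
qed


lemma J_eq: assumes "\<sigma> = 1 \<or> \<sigma> = -1" shows "cis (\<sigma> * pi / 2) = complex_of_real \<sigma> * \<i>"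
  using assms by (auto simp: complex_eq_iff)

locale gset =
  fixes n m :: nat and a \<sigma> :: real
  assumes hn: "n \<ge> 5" and hm1: "1 \<le> m" and hm2: "m < n" and hm3: "2 * m \<noteq> n"
    and ha: "a > 0" and h\<sigma>: "\<sigma> = 1 \<or> \<sigma> = -1"
begin

definition "\<beta> = real m * pi / real n"
definition "\<alpha> = 2 * pi * real m / real n"
definition "uu k = cis (2 * pi * real m * real k / real n)"
definition "ww = cis \<alpha>"

lemma npos: "real n > 0" using hn by simp

lemma alpha_beta: "\<alpha> = 2 * \<beta>" by (simp add: \<alpha>_def \<beta>_def)

lemma beta_bounds: "0 < \<beta>" "\<beta> < pi"
proof -
  show "0 < \<beta>" using hm1 npos by (simp add: \<beta>_def)
  have "real m < real n" using hm2 by simp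
  then have "real m * pi < real n * pi" by simp
  then show "\<beta> < pi" using npos by (simp add: \<beta>_def field_simps)
qed

lemma sin_beta: "sin \<beta> > 0" using beta_bounds by (rule sin_gt_zero)

lemma cos_beta: "cos \<beta> \<noteq> 0"
proof
  assume c: "cos \<beta> = 0"
  have "\<beta> = pi / 2"
  proof -
    have "cos \<beta> = cos (pi / 2)" using c by simp
    moreover have "0 \<le> \<beta>" "\<beta> \<le> pi" using beta_bounds by auto
    ultimately show ?thesis using cos_inj_pi[of \<beta> "pi/2"] by simp
  qed
  then have "real m * pi * 2 = pi * real n" using npos by (simp add: \<beta>_def field_simps)
  then have "real (2 * m) = real n" by simp
  then show False using hm3 by linarith
qed

lemma sin_alpha: "sin \<alpha> = 2 * sin \<beta> * cos \<beta>" by (simp add: alpha_beta sin_double)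
lemma cos_alpha: "cos \<alpha> = 2 * (cos \<beta>)\<^sup>2 - 1" by (simp add: alpha_beta cos_double_cos)
lemma cos_alpha': "cos \<alpha> = 1 - 2 * (sin \<beta>)\<^sup>2" by (simp add: alpha_beta cos_double_sin)
lemma sin_alpha_nz: "sin \<alpha> \<noteq> 0" using sin_beta cos_beta by (simp add: sin_alpha)

lemma uu_Suc: "uu (Suc k) = ww * uu k"
  by (simp add: uu_def ww_def \<alpha>_def cis_mult add_divide_distrib algebra_simps)

lemma uu_mod: "uu (k mod n) = uu k"
  unfolding uu_def by (rule cis_mod_period) (use hn in simp)

lemma uu_n: "uu n = uu 0" using uu_mod[of n] by simp

lemma uu_cnj: "uu k * cnj (uu k) = 1" by (simp add: uu_def cis_cnj cis_mult)

lemma ww_cnj: "ww * cnj ww = 1" by (simp add: ww_def cis_cnj cis_mult)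

lemma Gamma_eq: "Gamma a m n k = complex_of_real a * uu k" by (simp add: Gamma_def uu_def)

lemma Gamma_mod: "Gamma a m n (k mod n) = Gamma a m n k" by (simp add: Gamma_eq uu_mod)

lemma ww_minus_1: "ww - 1 = cis \<beta> * complex_of_real (2 * sin \<beta>) * \<i>"
  using cos_double_sin[of \<beta>] sin_double[of \<beta>] by (simp add: ww_def alpha_beta complex_eq_iff sin_double cos_double_sin power2_eq_square algebra_simps)

lemma norm_ww_minus_1: "norm (ww - 1) = 2 * sin \<beta>"
  using sin_beta by (simp add: ww_minus_1 norm_mult)

definition "lz = 2 * a * sin \<beta>"

lemma lz_pos: "lz > 0" using ha sin_beta by (simp add: lz_def)

lemma nuu: "norm (uu k) = 1" by (simp add: uu_def)

lemma edge_Gamma: "Gamma a m n (Suc k mod n) - Gamma a m n (k mod n) = complex_of_real a * uu k * (ww - 1)"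
  by (simp add: Gamma_eq uu_mod uu_Suc algebra_simps)

lemma edge_len_Gamma: "edge_len n (Gamma a m n) k = lz"
  using ha by (simp add: edge_len_def edge_Gamma norm_mult nuu norm_ww_minus_1 lz_def)

definition "KK = cis (\<sigma> * pi / 2) * complex_of_real a * (ww - 1) / complex_of_real lz"

lemma edge_normal_Gamma: "edge_normal \<sigma> n (Gamma a m n) k = KK * uu k"
  by (simp add: edge_normal_def edge_len_Gamma edge_Gamma rot_def KK_def)

lemma KK_nz: "KK \<noteq> 0"
proof -
  have "ww - 1 \<noteq> 0" using norm_ww_minus_1 sin_beta by (metis norm_zero less_irrefl mult_pos_pos zero_less_numeral)
  then show ?thesis using ha lz_pos by (simp add: KK_def)
qed

lemma uu_prev: "uu (prev_idx n k) = cnj ww * uu k"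
proof -
  have "uu (prev_idx n k) = uu (k + n - 1)" by (simp add: prev_idx_def uu_mod)
  moreover have "uu (k + n) = ww * uu (k + n - 1)" using uu_Suc[of "k + n - 1"] hn by simp
  moreover have "uu (k + n) = uu k" using uu_mod[of "k + n"] uu_mod[of k] by simp
  ultimately have "uu k = ww * uu (prev_idx n k)" by simp
  then have "cnj ww * uu k = (cnj ww * ww) * uu (prev_idx n k)" by (simp add: mult.assoc)
  then show ?thesis using ww_cnj by (simp add: mult.commute)
qed

lemma nu_rel: "edge_normal \<sigma> n (Gamma a m n) k = ww * edge_normal \<sigma> n (Gamma a m n) (prev_idx n k)"
proof -
  have "ww * (KK * (cnj ww * uu k)) = (ww * cnj ww) * KK * uu k" by (simp add: algebra_simps)
  then show ?thesis by (simp add: edge_normal_Gamma uu_prev ww_cnj)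
qed

lemma cos_signed_angle: "cos (signed_angle \<sigma> n (Gamma a m n) k) = cos \<alpha>"
proof -
  define \<nu> where "\<nu> = edge_normal \<sigma> n (Gamma a m n) k"
  define \<nu>p where "\<nu>p = edge_normal \<sigma> n (Gamma a m n) (prev_idx n k)"
  have \<nu>: "\<nu> = ww * \<nu>p" unfolding \<nu>_def \<nu>p_def by (rule nu_rel)
  have \<nu>p0: "\<nu>p \<noteq> 0" unfolding \<nu>p_def edge_normal_Gamma using KK_nz
    by (metis mult_eq_0_iff nuu norm_zero zero_neq_one)
  have ss: "\<sigma> * \<sigma> = 1" using h\<sigma> by auto
  have key: "cis (\<sigma> * \<theta>) = ww \<longleftrightarrow> \<nu> = rot (\<sigma> * \<theta>) \<nu>p" for \<theta>
    using \<nu>p0 by (auto simp: rot_def \<nu>)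
  define \<theta>' where "\<theta>' = (if \<alpha> < pi then \<alpha> else \<alpha> - 2 * pi)"
  have apos: "0 < \<alpha>" "\<alpha> < 2 * pi" using beta_bounds by (auto simp: alpha_beta)
  have "\<alpha> \<noteq> pi"
  proof
    assume "\<alpha> = pi"
    then have "2 * \<beta> = pi" by (simp add: alpha_beta)
    then have "\<beta> = pi / 2" by linarith
    then have "cos \<beta> = 0" by (simp only: cos_pi_half)
    then show False using cos_beta by simp
  qed
  then have th'b: "-pi < \<theta>'" "\<theta>' < pi" using apos by (auto simp: \<theta>'_def)
  have cth': "cis \<theta>' = ww" by (simp add: \<theta>'_def ww_def complex_eq_iff cos_diff sin_diff)
  define \<theta>0 where "\<theta>0 = \<sigma> * \<theta>'"
  have th0b: "-pi < \<theta>0" "\<theta>0 \<le> pi" using th'b h\<sigma> by (auto simp: \<theta>0_def)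
  have c0: "cis (\<sigma> * \<theta>0) = ww" using cth' ss by (simp add: \<theta>0_def mult.assoc[symmetric])
  have uniq: "\<theta> = \<theta>0" if "-pi < \<theta>" "\<theta> \<le> pi" "cis (\<sigma> * \<theta>) = ww" for \<theta>
  proof -
    have "cis (\<sigma> * \<theta>) = cis (\<sigma> * \<theta>0)" using that c0 by simp
    then have "cis \<theta> = cis \<theta>0" using h\<sigma>
      by (auto simp: cis_cnj[symmetric] dest: arg_cong[where f=cnj])
    then have "Arg (rcis 1 \<theta>) = Arg (rcis 1 \<theta>0)" by (simp add: rcis_def)
    moreover have "Arg (rcis 1 \<theta>) = \<theta>" by (rule Arg_unique') (use that in auto)
    moreover have "Arg (rcis 1 \<theta>0) = \<theta>0" by (rule Arg_unique') (use th0b in auto)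
    ultimately show ?thesis by simp
  qed
  have ex1: "\<exists>!\<theta>. -pi < \<theta> \<and> \<theta> \<le> pi \<and> \<nu> = rot (\<sigma> * \<theta>) \<nu>p"
    using th0b c0 uniq key by blast
  have "-pi < signed_angle \<sigma> n (Gamma a m n) k \<and> signed_angle \<sigma> n (Gamma a m n) k \<le> pi \<and>
      \<nu> = rot (\<sigma> * signed_angle \<sigma> n (Gamma a m n) k) \<nu>p"
    unfolding signed_angle_def \<nu>_def[symmetric] \<nu>p_def[symmetric] by (rule theI'[OF ex1])
  then have "cis (\<sigma> * signed_angle \<sigma> n (Gamma a m n) k) = ww" using key by blast
  then have "Re (cis (\<sigma> * signed_angle \<sigma> n (Gamma a m n) k)) = Re ww" by simp
  then show ?thesis using h\<sigma> by (auto simp: ww_def)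
qed

lemma A1: "(ww - 1) * (1 + cnj ww) = complex_of_real (2 * sin \<alpha>) * \<i>"
  by (simp add: ww_def complex_eq_iff algebra_simps ss)

lemma A2: "KK * (1 + cnj ww) = complex_of_real (- 2 * \<sigma> * a * sin \<alpha> / lz)"
proof -
  have "KK * (1 + cnj ww) = cis (\<sigma> * pi / 2) * complex_of_real a * ((ww - 1) * (1 + cnj ww)) / complex_of_real lz"
    by (simp add: KK_def algebra_simps)
  also have "\<dots> = complex_of_real \<sigma> * \<i> * complex_of_real a * (complex_of_real (2 * sin \<alpha>) * \<i>) / complex_of_real lz"
    by (simp only: A1 J_eq[OF h\<sigma>])
  also have "\<dots> = complex_of_real (- 2 * \<sigma> * a * sin \<alpha> / lz)"
    by (simp add: complex_eq_iff)
  finally show ?thesis .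
qed

lemma vertex_normal_Gamma: "vertex_normal \<sigma> n (Gamma a m n) k = complex_of_real (- \<sigma> / cos \<beta>) * uu k"
proof -
  have "vertex_normal \<sigma> n (Gamma a m n) k = (1 / (1 + cos \<alpha>)) *\<^sub>R (KK * (1 + cnj ww) * uu k)"
    by (simp add: vertex_normal_def cos_signed_angle edge_normal_Gamma uu_prev algebra_simps)
  also have "\<dots> = complex_of_real ((1 / (1 + cos \<alpha>)) * (- 2 * \<sigma> * a * sin \<alpha> / lz)) * uu k"
    by (simp add: A2 scaleR_conv_of_real)
  also have "(1 / (1 + cos \<alpha>)) * (- 2 * \<sigma> * a * sin \<alpha> / lz) = - \<sigma> / cos \<beta>"
  proof -
    have "1 + cos \<alpha> = 2 * cos \<beta> * cos \<beta>" by (simp add: cos_alpha power2_eq_square)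
    then show ?thesis using ha sin_beta cos_beta by (simp add: sin_alpha lz_def field_simps)
  qed
  finally show ?thesis .
qed

end

lemma curve_vol_eq:
  assumes cl: "\<forall>k<n. p (Suc k mod n) \<noteq> p k"
  shows "curve_vol \<sigma> n p = 1 / 2 * (\<Sum>k<n. p k \<bullet> (cis (\<sigma> * pi / 2) * (p (Suc k mod n) - p k)))"
  unfolding curve_vol_def
proof (rule arg_cong[where f="\<lambda>x. 1 / 2 * x"], rule sum.cong[OF refl])
  fix k assume "k \<in> {..<n}"
  then have k: "k < n" by simp
  define d where "d = p (Suc k mod n) - p k"
  have l: "edge_len n p k = norm d" using k by (simp add: edge_len_def d_def)
  have d0: "norm d \<noteq> 0" using cl k by (simp add: d_def)
  have en: "edge_normal \<sigma> n p k = (1 / norm d) *\<^sub>R (cis (\<sigma> * pi / 2) * d)"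
    using k by (simp add: edge_normal_def rot_def l d_def[symmetric] scaleR_conv_of_real field_simps)
  show "p k \<bullet> edge_normal \<sigma> n p k * edge_len n p k = p k \<bullet> (cis (\<sigma> * pi / 2) * (p (Suc k mod n) - p k))"
    using d0 by (simp add: en l d_def[symmetric])
qed



context gset begin

lemma psi_mod:
  fixes A B :: real
  defines "\<psi> \<equiv> (\<lambda>k::nat. A * cos (2 * pi * real k / real n) + B * sin (2 * pi * real k / real n))"
  shows "\<psi> (j mod n) = \<psi> j"
proof -
  have "cis (2 * pi * real 1 * real (j mod n) / real n) = cis (2 * pi * real 1 * real j / real n)"
    by (rule cis_mod_period) (use hn in simp)
  then have "cis (2 * pi * real (j mod n) / real n) = cis (2 * pi * real j / real n)" by simp
  then have "cos (2 * pi * real (j mod n) / real n) = cos (2 * pi * real j / real n)"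
       "sin (2 * pi * real (j mod n) / real n) = sin (2 * pi * real j / real n)"
    by (auto simp: complex_eq_iff)
  then show ?thesis by (simp add: \<psi>_def)
qed

lemma main_var:
  fixes A B :: real and \<epsilon> :: real and P :: "real \<Rightarrow> nat \<Rightarrow> complex" and P' P'' :: "nat \<Rightarrow> real \<Rightarrow> complex"
  defines "\<psi> \<equiv> (\<lambda>k::nat. A * cos (2 * pi * real k / real n) + B * sin (2 * pi * real k / real n))"
  assumes eps: "\<epsilon> > 0"
    and cdc: "\<forall>t\<in>ball 0 \<epsilon>. closed_discrete_curve n (P t)"
    and d1: "\<forall>k<n. \<forall>t\<in>ball 0 \<epsilon>. ((\<lambda>s. P s k) has_vector_derivative P' k t) (at t)"
    and d2: "\<forall>k<n. \<forall>t\<in>ball 0 \<epsilon>. (P' k has_vector_derivative P'' k t) (at t)"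
    and P0: "\<forall>k<n. P 0 k = Gamma a m n k"
    and vol: "\<forall>t\<in>ball 0 \<epsilon>. curve_vol \<sigma> n (P t) = curve_vol \<sigma> n (P 0)"
    and P'0: "\<forall>k<n. P' k 0 = \<psi> k *\<^sub>R vertex_normal \<sigma> n (Gamma a m n) k"
  shows "(deriv (\<lambda>t. curve_length n (P t)) has_real_derivative
     (- \<sigma> / cos \<beta>) * (- \<sigma> / cos \<beta>) / lz * ((1 + cos \<alpha>) * (\<Sum>k<n. \<psi> k * \<psi> k) + (cos \<alpha> - 3) * (\<Sum>k<n. \<psi> k * \<psi> (Suc k)))) (at 0)"
proof -
  define J where "J = cis (\<sigma> * pi / 2)"
  define c where "c = - \<sigma> / cos \<beta>"
  have z: "0 \<in> ball (0::real) \<epsilon>" using eps by simp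
  have cl: "\<forall>t\<in>ball 0 \<epsilon>. \<forall>k<n. P t (Suc k mod n) \<noteq> P t k"
    using cdc by (simp add: closed_discrete_curve_def)
  have vol': "\<forall>t\<in>ball 0 \<epsilon>. (\<Sum>k<n. P t k \<bullet> (J * (P t (Suc k mod n) - P t k)))
        = (\<Sum>k<n. P 0 k \<bullet> (J * (P 0 (Suc k mod n) - P 0 k)))"
  proof
    fix t :: real assume t: "t \<in> ball 0 \<epsilon>"
    have "curve_vol \<sigma> n (P t) = curve_vol \<sigma> n (P 0)" using vol t by blast
    then show "(\<Sum>k<n. P t k \<bullet> (J * (P t (Suc k mod n) - P t k)))
        = (\<Sum>k<n. P 0 k \<bullet> (J * (P 0 (Suc k mod n) - P 0 k)))"
      using curve_vol_eq[of n "P t" \<sigma>] curve_vol_eq[of n "P 0" \<sigma>] cl t z by (simp add: J_def)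
  qed
  note G = second_variation_general[OF _ eps cl d1 d2 vol']
  have n0: "n > 0" using hn by simp
  have Leq: "(\<lambda>t. curve_length n (P t)) = (\<lambda>t. \<Sum>k<n. norm (P t (Suc k mod n) - P t k))"
    by (rule ext, unfold curve_length_def edge_len_def, rule sum.cong[OF refl]) simp
  define R where "R j = P'' (j mod n) 0" for j
  define q where "q j = complex_of_real (c * \<psi> j) * uu j" for j
  define p where "p j = complex_of_real a * uu j" for j
  have fP0: "P 0 k = p k" if "k < n" for k using P0 that by (simp add: Gamma_eq p_def)
  have fP0s: "P 0 (Suc k mod n) = p (Suc k)" for k
    using P0 n0 by (simp add: Gamma_eq p_def uu_mod)
  have qmod: "q (j mod n) = q j" for j
    using psi_mod[where A=A and B=B and j=j] by (simp add: q_def uu_mod \<psi>_def)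
  have fP'0: "P' k 0 = q k" if "k < n" for k
    using P'0 that by (simp add: vertex_normal_Gamma q_def c_def scaleR_conv_of_real)
  have fP'0s: "P' (Suc k mod n) 0 = q (Suc k)" for k
    using fP'0[of "Suc k mod n"] n0 qmod[of "Suc k"] by simp
  have fR: "P'' k 0 = R k" if "k < n" for k using that by (simp add: R_def)
  have fRs: "P'' (Suc k mod n) 0 = R (Suc k)" for k by (simp add: R_def)
  have \<psi>n: "\<psi> n = \<psi> 0" using psi_mod[where A=A and B=B and j=n] by (simp add: \<psi>_def)
  have Rn: "R n = R 0" by (simp add: R_def)
  have s\<sigma>: "\<sigma> \<noteq> 0" using h\<sigma> by auto
  have nw: "a * norm (ww - 1) = lz" by (simp add: norm_ww_minus_1 lz_def)
  have l2: "lz * lz = a * a * (2 - 2 * cos \<alpha>)" by (simp add: lz_def cos_alpha' power2_eq_square algebra_simps)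
  have volc: "(\<Sum>k<n. R k \<bullet> (J * (p (Suc k) - p k)) + 2 * (q k \<bullet> (J * (q (Suc k) - q k))) + p k \<bullet> (J * (R (Suc k) - R k))) = 0"
  proof -
    have "(\<Sum>k<n. R k \<bullet> (J * (p (Suc k) - p k)) + 2 * (q k \<bullet> (J * (q (Suc k) - q k))) + p k \<bullet> (J * (R (Suc k) - R k)))
      = (\<Sum>k<n. P'' k 0 \<bullet> (J * (P 0 (Suc k mod n) - P 0 k)) + 2 * (P' k 0 \<bullet> (J * (P' (Suc k mod n) 0 - P' k 0)))
           + P 0 k \<bullet> (J * (P'' (Suc k mod n) 0 - P'' k 0)))"
      by (rule sum.cong[OF refl]) (simp add: fP0 fP0s fP'0 fP'0s fR fRs)
    also have "\<dots> = 0" by (rule G(2)[OF n0])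
    finally show ?thesis .
  qed
  note C = core[of uu ww n \<psi> R \<alpha> J \<sigma> a lz c, OF uu_Suc uu_n \<psi>n Rn uu_cnj ww_def J_eq[OF h\<sigma>, folded J_def]
     s\<sigma> sin_alpha_nz ha lz_pos nw l2, unfolded p_def[symmetric] q_def[symmetric], OF volc]
  have "(\<Sum>k<n. ((((P' (Suc k mod n) 0 - P' k 0) \<bullet> (P' (Suc k mod n) 0 - P' k 0))
          + (P 0 (Suc k mod n) - P 0 k) \<bullet> (P'' (Suc k mod n) 0 - P'' k 0)) * norm (P 0 (Suc k mod n) - P 0 k)
          - ((P 0 (Suc k mod n) - P 0 k) \<bullet> (P' (Suc k mod n) 0 - P' k 0))
            * (((P 0 (Suc k mod n) - P 0 k) \<bullet> (P' (Suc k mod n) 0 - P' k 0)) / norm (P 0 (Suc k mod n) - P 0 k)))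
         / (norm (P 0 (Suc k mod n) - P 0 k) * norm (P 0 (Suc k mod n) - P 0 k)))
     = (\<Sum>k<n. (((q (Suc k) - q k) \<bullet> (q (Suc k) - q k) + (p (Suc k) - p k) \<bullet> (R (Suc k) - R k)) * norm (p (Suc k) - p k)
          - ((p (Suc k) - p k) \<bullet> (q (Suc k) - q k)) * (((p (Suc k) - p k) \<bullet> (q (Suc k) - q k)) / norm (p (Suc k) - p k)))
         / (norm (p (Suc k) - p k) * norm (p (Suc k) - p k)))"
    by (rule sum.cong[OF refl]) (simp add: fP0 fP0s fP'0 fP'0s fR fRs)
  also have "\<dots> = c * c / lz * ((1 + cos \<alpha>) * (\<Sum>k<n. \<psi> k * \<psi> k) + (cos \<alpha> - 3) * (\<Sum>k<n. \<psi> k * \<psi> (Suc k)))"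
    by (rule C)
  finally have eqD: "(\<Sum>k<n. ((((P' (Suc k mod n) 0 - P' k 0) \<bullet> (P' (Suc k mod n) 0 - P' k 0))
          + (P 0 (Suc k mod n) - P 0 k) \<bullet> (P'' (Suc k mod n) 0 - P'' k 0)) * norm (P 0 (Suc k mod n) - P 0 k)
          - ((P 0 (Suc k mod n) - P 0 k) \<bullet> (P' (Suc k mod n) 0 - P' k 0))
            * (((P 0 (Suc k mod n) - P 0 k) \<bullet> (P' (Suc k mod n) 0 - P' k 0)) / norm (P 0 (Suc k mod n) - P 0 k)))
         / (norm (P 0 (Suc k mod n) - P 0 k) * norm (P 0 (Suc k mod n) - P 0 k)))
     = c * c / lz * ((1 + cos \<alpha>) * (\<Sum>k<n. \<psi> k * \<psi> k) + (cos \<alpha> - 3) * (\<Sum>k<n. \<psi> k * \<psi> (Suc k)))" .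
  show ?thesis
    using G(1)[OF n0] unfolding Leq eqD c_def .
qed

end


context gset begin

lemma beta_eq: "real m * pi / real n = \<beta>" by (simp add: \<beta>_def)

lemma abs_sin_beta: "\<bar>sin \<beta>\<bar> = sin \<beta>" using sin_beta by simp

lemma V_value:
  fixes S2 :: real
  shows "(- \<sigma> / cos \<beta>) * (- \<sigma> / cos \<beta>) / lz * ((1 + cos \<alpha>) * S2 + (cos \<alpha> - 3) * (cos (2 * pi / real n) * S2))
     = 4 / (2 * a * \<bar>sin (real m * pi / real n)\<bar>) * ((sin (pi / real n))\<^sup>2 - cos (2 * pi / real n) * (tan (real m * pi / real n))\<^sup>2) * S2"
proof -
  define s where "s = (sin (pi / real n))\<^sup>2"
  define C where "C = cos \<beta>"
  have ch: "cos (2 * pi / real n) = 1 - 2 * s"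
    using cos_double_sin[of "pi / real n"] by (simp add: s_def)
  have ss: "\<sigma> * \<sigma> = 1" using h\<sigma> by auto
  have tb: "(tan \<beta>)\<^sup>2 = (1 - C * C) / (C * C)"
    using sin_cos_squared_add[of \<beta>] by (simp add: tan_def C_def power_divide power2_eq_square algebra_simps)
  have ca: "cos \<alpha> = 2 * C * C - 1" by (simp add: cos_alpha C_def power2_eq_square)
  have C0: "C \<noteq> 0" using cos_beta by (simp add: C_def)
  have lz: "lz = 2 * a * sin \<beta>" by (simp add: lz_def)
  have sb: "sin \<beta> > 0" by (rule sin_beta)
  have lhs: "(- \<sigma> / cos \<beta>) * (- \<sigma> / cos \<beta>) = 1 / (C * C)" using ss by (simp add: C_def field_simps)
  show ?thesis
    unfolding beta_eq abs_sin_beta lhs ch tb ca s_def[symmetric] lz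
    using C0 sb ha by (simp add: field_simps)
qed

lemma x_facts: "0 < pi / real n" "2 * (pi / real n) < pi / 2" "0 < sin (pi / real n)" "0 < cos (pi / real n)"
    "0 < cos (2 * (pi / real n))"
proof -
  show x0: "0 < pi / real n" using npos by simp
  have "real n \<ge> 5" using hn by simp
  then have "pi / real n \<le> pi / 5" by (intro divide_left_mono) auto
  then show x1: "2 * (pi / real n) < pi / 2" using pi_gt_zero by linarith
  show "0 < sin (pi / real n)" using x0 x1 by (intro sin_gt_zero) auto
  show "0 < cos (pi / real n)" using x0 x1 by (intro cos_gt_zero_pi) auto
  show "0 < cos (2 * (pi / real n))" using x0 x1 by (intro cos_gt_zero_pi) auto
qed

lemma bracket_nonneg:
  assumes "m = 1 \<or> m = n - 1"
  shows "(sin (pi / real n))\<^sup>2 - cos (2 * pi / real n) * (tan (real m * pi / real n))\<^sup>2 \<ge> 0"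
proof -
  define x where "x = pi / real n"
  have tx: "(tan (real m * pi / real n))\<^sup>2 = (tan x)\<^sup>2"
  proof (cases "m = 1")
    case True then show ?thesis by (simp add: x_def)
  next
    case False
    then have "m = n - 1" using assms by simp
    then have "real m * pi / real n = pi - x" using hn npos by (simp add: x_def of_nat_diff field_simps)
    then show ?thesis by (simp add: tan_def)
  qed
  have cx: "cos x > 0" "sin x > 0" using x_facts by (simp_all add: x_def)
  have c2: "cos (2 * pi / real n) = cos x * cos x - sin x * sin x"
    using cos_double[of x] by (simp add: x_def power2_eq_square)
  have "(sin x)\<^sup>2 - (cos x * cos x - sin x * sin x) * (tan x)\<^sup>2 = sin x * sin x * sin x * sin x / (cos x)\<^sup>2"
    using cx by (simp add: tan_def power2_eq_square field_simps)
  also have "\<dots> \<ge> 0"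
  proof -
    have "sin x * sin x * sin x * sin x = (sin x * sin x) * (sin x * sin x)" by simp
    then show ?thesis by (metis divide_nonneg_nonneg zero_le_power2 zero_le_square)
  qed
  finally show ?thesis by (simp add: tx c2 x_def)
qed

lemma bracket_neg:
  assumes "2 \<le> m" "m \<le> n - 2"
  shows "(sin (pi / real n))\<^sup>2 - cos (2 * pi / real n) * (tan (real m * pi / real n))\<^sup>2 < 0"
proof -
  define x where "x = pi / real n"
  have xf: "0 < x" "2 * x < pi / 2" "0 < sin x" "0 < cos x" "0 < cos (2 * x)" using x_facts by (simp_all add: x_def)
  have b: "\<beta> = real m * x" by (simp add: x_def \<beta>_def)
  have b1: "2 * x \<le> \<beta>" using assms(1) xf(1) by (simp add: b)
  have b2: "\<beta> \<le> pi - 2 * x"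
  proof -
    have "real m \<le> real n - 2" using assms hn by linarith
    then have "real m * x \<le> (real n - 2) * x" using xf(1) by (simp add: mult_right_mono)
    also have "\<dots> = pi - 2 * x" using npos by (simp add: x_def field_simps)
    finally show ?thesis by (simp add: b)
  qed
  have u: "cos \<beta> \<le> cos (2 * x)"
    using b1 b2 xf by (subst cos_mono_le_eq) auto
  have l: "cos (pi - 2 * x) \<le> cos \<beta>"
    using b1 b2 xf by (subst cos_mono_le_eq) auto
  then have l': "- cos (2 * x) \<le> cos \<beta>" by simp
  define C where "C = cos \<beta>"
  define D where "D = cos (2 * x)"
  have C0: "C \<noteq> 0" using cos_beta by (simp add: C_def)
  have D0: "D > 0" using xf by (simp add: D_def)
  have CD: "C * C \<le> D * D"
  proof -
    have "0 \<le> (D - C) * (D + C)" using u l' by (simp add: C_def D_def)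
    then show ?thesis by (simp add: algebra_simps)
  qed
  have CC: "C * C > 0" by (meson C0 not_real_square_gt_zero)
  have t: "(tan \<beta>)\<^sup>2 = 1 / (C * C) - 1"
    using sin_cos_squared_add[of \<beta>] C0 by (simp add: tan_def C_def power_divide power2_eq_square field_simps)
  have "1 / (D * D) \<le> 1 / (C * C)" using CD CC by (simp add: frac_le)
  then have t2: "D * (1 / (D * D) - 1) \<le> D * (tan \<beta>)\<^sup>2" using D0 by (simp add: t)
  have "D * (1 / (D * D) - 1) = (1 - D * D) / D" using D0 by (simp add: field_simps)
  also have "1 - D * D = (sin (2 * x))\<^sup>2" using sin_cos_squared_add[of "2 * x"] by (simp add: D_def power2_eq_square)
  also have "(sin (2 * x))\<^sup>2 = 4 * (sin x)\<^sup>2 * (cos x)\<^sup>2" by (simp add: sin_double power_mult_distrib)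
  finally have t3: "4 * (sin x)\<^sup>2 * (cos x)\<^sup>2 / D \<le> D * (tan \<beta>)\<^sup>2" using t2 by simp
  have "(sin x)\<^sup>2 < 4 * (sin x)\<^sup>2 * (cos x)\<^sup>2 / D"
  proof -
    have Dx: "D = 2 * (cos x)\<^sup>2 - 1" by (simp add: D_def cos_double_cos)
    have "D < 4 * (cos x)\<^sup>2" using Dx zero_le_power2[of "cos x"] by linarith
    then have "(sin x)\<^sup>2 * D < (sin x)\<^sup>2 * (4 * (cos x)\<^sup>2)" using xf by simp
    then show ?thesis using D0 by (simp add: field_simps)
  qed
  with t3 have "(sin x)\<^sup>2 - D * (tan \<beta>)\<^sup>2 < 0" by linarith
  then show ?thesis by (simp add: x_def D_def beta_eq mult.assoc)
qed

end

context gset begin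

lemma S2_pos:
  fixes A B :: real
  defines "\<psi> \<equiv> (\<lambda>k::nat. A * cos (2 * pi * real k / real n) + B * sin (2 * pi * real k / real n))"
  assumes AB: "(A, B) \<noteq> (0, 0)"
  shows "(\<Sum>k<n. (\<psi> k)\<^sup>2) > 0"
proof -
  have sub: "{0, 1} \<subseteq> {..<n}" using hn by auto
  have "(\<Sum>k\<in>{0,1}. (\<psi> k)\<^sup>2) \<le> (\<Sum>k<n. (\<psi> k)\<^sup>2)"
    by (rule sum_mono2) (use sub in auto)
  moreover have "(\<Sum>k\<in>{0,1}. (\<psi> k)\<^sup>2) = (\<psi> 0)\<^sup>2 + (\<psi> 1)\<^sup>2" by simp
  moreover have "(\<psi> 0)\<^sup>2 + (\<psi> 1)\<^sup>2 > 0"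
  proof (cases "A = 0")
    case True
    then have B: "B \<noteq> 0" using AB by simp
    have "sin (2 * (pi / real n)) > 0" using x_facts by (intro sin_gt_zero) auto
    then have "\<psi> 1 \<noteq> 0" using True B by (simp add: \<psi>_def)
    then show ?thesis by (simp add: add_nonneg_pos)
  next
    case False
    then have "\<psi> 0 \<noteq> 0" by (simp add: \<psi>_def)
    then show ?thesis by (simp add: add_pos_nonneg)
  qed
  ultimately show ?thesis by linarith
qed

end

theorem mainTheorem16:
  fixes n m :: nat and a A B \<sigma> :: real
  assumes hn: "n \<ge> 5" and hm1: "1 \<le> m" and hm2: "m \<le> n - 1" and hm3: "2 * m \<noteq> n"
    and ha: "a > 0" and h\<sigma>: "\<sigma> = 1 \<or> \<sigma> = -1"
  defines "\<psi> \<equiv> (\<lambda>k::nat. A * cos (2 * pi * real k / real n) + B * sin (2 * pi * real k / real n))"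
    and "l0 \<equiv> 2 * a * \<bar>sin (real m * pi / real n)\<bar>"
  defines "V \<equiv> 4 / l0 * ((sin (pi / real n))\<^sup>2 - cos (2 * pi / real n) * (tan (real m * pi / real n))\<^sup>2)
                 * (\<Sum>k<n. (\<psi> k)\<^sup>2)"
  shows "(\<Sum>k<n. \<psi> k) = 0
    \<and> (\<forall>(\<epsilon>::real) (P :: real \<Rightarrow> nat \<Rightarrow> complex) (P' :: nat \<Rightarrow> real \<Rightarrow> complex)
          (P'' :: nat \<Rightarrow> real \<Rightarrow> complex).
          \<epsilon> > 0
        \<and> (\<forall>t\<in>ball 0 \<epsilon>. closed_discrete_curve n (P t))
        \<and> (\<forall>k<n. \<forall>t\<in>ball 0 \<epsilon>. ((\<lambda>s. P s k) has_vector_derivative P' k t) (at t))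
        \<and> (\<forall>k<n. \<forall>t\<in>ball 0 \<epsilon>. (P' k has_vector_derivative P'' k t) (at t))
        \<and> (\<forall>k<n. continuous_on (ball 0 \<epsilon>) (P'' k))
        \<and> (\<forall>k<n. P 0 k = Gamma a m n k)
        \<and> (\<forall>t\<in>ball 0 \<epsilon>. curve_vol \<sigma> n (P t) = curve_vol \<sigma> n (P 0))
        \<and> (\<forall>k<n. P' k 0 = \<psi> k *\<^sub>R vertex_normal \<sigma> n (Gamma a m n) k)
        \<longrightarrow> (deriv (\<lambda>t. curve_length n (P t)) has_real_derivative V) (at 0))
    \<and> (m = 1 \<or> m = n - 1 \<longrightarrow> V \<ge> 0)
    \<and> (2 \<le> m \<and> m \<le> n - 2 \<and> (A, B) \<noteq> (0, 0) \<longrightarrow> V < 0)"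
proof -
  have hm2': "m < n" using hm2 hn by linarith
  interpret gset n m a \<sigma> by unfold_locales (use hn hm1 hm2' hm3 ha h\<sigma> in auto)
  have l0pos: "l0 > 0" unfolding l0_def using ha sin_beta by (simp add: beta_eq)
  have S2nn: "(\<Sum>k<n. (\<psi> k)\<^sup>2) \<ge> 0" by (simp add: sum_nonneg)
  have Vf: "V = 4 / l0 * ((sin (pi / real n))\<^sup>2 - cos (2 * pi / real n) * (tan (real m * pi / real n))\<^sup>2)
                 * (\<Sum>k<n. (\<psi> k)\<^sup>2)" by (simp add: V_def)
  show ?thesis
  proof (intro conjI allI impI)
    show "(\<Sum>k<n. \<psi> k) = 0" unfolding \<psi>_def by (rule psi_facts(1)[OF hn])
  next
    fix \<epsilon> :: real and P :: "real \<Rightarrow> nat \<Rightarrow> complex" and P' P'' :: "nat \<Rightarrow> real \<Rightarrow> complex"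
    assume H: "\<epsilon> > 0
        \<and> (\<forall>t\<in>ball 0 \<epsilon>. closed_discrete_curve n (P t))
        \<and> (\<forall>k<n. \<forall>t\<in>ball 0 \<epsilon>. ((\<lambda>s. P s k) has_vector_derivative P' k t) (at t))
        \<and> (\<forall>k<n. \<forall>t\<in>ball 0 \<epsilon>. (P' k has_vector_derivative P'' k t) (at t))
        \<and> (\<forall>k<n. continuous_on (ball 0 \<epsilon>) (P'' k))
        \<and> (\<forall>k<n. P 0 k = Gamma a m n k)
        \<and> (\<forall>t\<in>ball 0 \<epsilon>. curve_vol \<sigma> n (P t) = curve_vol \<sigma> n (P 0))
        \<and> (\<forall>k<n. P' k 0 = \<psi> k *\<^sub>R vertex_normal \<sigma> n (Gamma a m n) k)"
    then have h1: "\<epsilon> > 0" and h2: "\<forall>t\<in>ball 0 \<epsilon>. closed_discrete_curve n (P t)"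
      and h3: "\<forall>k<n. \<forall>t\<in>ball 0 \<epsilon>. ((\<lambda>s. P s k) has_vector_derivative P' k t) (at t)"
      and h4: "\<forall>k<n. \<forall>t\<in>ball 0 \<epsilon>. (P' k has_vector_derivative P'' k t) (at t)"
      and h6: "\<forall>k<n. P 0 k = Gamma a m n k"
      and h7: "\<forall>t\<in>ball 0 \<epsilon>. curve_vol \<sigma> n (P t) = curve_vol \<sigma> n (P 0)"
      and h8: "\<forall>k<n. P' k 0 = \<psi> k *\<^sub>R vertex_normal \<sigma> n (Gamma a m n) k"
      by blast+
    have MV: "(deriv (\<lambda>t. curve_length n (P t)) has_real_derivative
       (- \<sigma> / cos \<beta>) * (- \<sigma> / cos \<beta>) / lz * ((1 + cos \<alpha>) * (\<Sum>k<n. \<psi> k * \<psi> k) + (cos \<alpha> - 3) * (\<Sum>k<n. \<psi> k * \<psi> (Suc k)))) (at 0)"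
      using main_var[OF h1 h2 h3 h4 h6 h7 h8[unfolded \<psi>_def]] unfolding \<psi>_def .
    have S1: "(\<Sum>k<n. \<psi> k * \<psi> (Suc k)) = cos (2 * pi / real n) * (\<Sum>k<n. \<psi> k * \<psi> k)"
      unfolding \<psi>_def by (rule psi_facts(2)[OF hn])
    have sq: "(\<Sum>k<n. (\<psi> k)\<^sup>2) = (\<Sum>k<n. \<psi> k * \<psi> k)" by (simp add: power2_eq_square)
    have "(- \<sigma> / cos \<beta>) * (- \<sigma> / cos \<beta>) / lz * ((1 + cos \<alpha>) * (\<Sum>k<n. \<psi> k * \<psi> k) + (cos \<alpha> - 3) * (\<Sum>k<n. \<psi> k * \<psi> (Suc k)))
       = V" unfolding S1 V_def l0_def sq by (rule V_value)
    with MV show "(deriv (\<lambda>t. curve_length n (P t)) has_real_derivative V) (at 0)" by simp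
  next
    assume "m = 1 \<or> m = n - 1"
    from bracket_nonneg[OF this] show "V \<ge> 0" unfolding Vf using l0pos S2nn by simp
  next
    assume "2 \<le> m \<and> m \<le> n - 2 \<and> (A, B) \<noteq> (0, 0)"
    then have a1: "2 \<le> m" "m \<le> n - 2" and ab: "(A, B) \<noteq> (0, 0)" by auto
    have S2p: "(\<Sum>k<n. (\<psi> k)\<^sup>2) > 0" unfolding \<psi>_def by (rule S2_pos[OF ab])
    have "4 / l0 > 0" using l0pos by simp
    then have "4 / l0 * ((sin (pi / real n))\<^sup>2 - cos (2 * pi / real n) * (tan (real m * pi / real n))\<^sup>2) < 0"
      using bracket_neg[OF a1] by (rule mult_pos_neg)
    then show "V < 0" unfolding Vf using S2p by (rule mult_neg_pos)
  qed
qed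

end
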